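(* Let $b_1$ and $b_2$ be slowly varying functions satisfying $\lim_{t\to0^+}b_i(t)\in(0,\infty)$ for $i=1,2$. Then the function $b$ defined for $t\in(0,\infty)$ by \[b(t)=\begin{cases} b_2\!\left(\frac1t-1\right) & t<1,\\ 1 & t=1,\\ b_1(t-1) & t>1,\end{cases}\] is also slowly varying and satisfies $b(t)\approx b_2(1/t)$ for $t\in(0,1)$ and $b\approx b_1$ on $(1,\infty)$.
   Context: A measurable function $b:(0,\infty)\to(0,\infty)$ is called slowly varying if for every $\varepsilon>0$ there exist a non-decreasing function $b_\varepsilon$ and a non-increasing function $b_{-\varepsilon}$ on $(0,\infty)$ such that $t^{\varepsilon}b(t)\approx b_\varepsilon(t)$ and $t^{-\varepsilon}b(t)\approx b_{-\varepsilon}(t)$ on $(0,\infty)$, where $f\approx g$ on a set $A$ means $C^{-1}g(t)\le f(t)\le Cg(t)$ for all $t\in A$, for some constant $C\ge1$ independent of $t$. *)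

theory Defs
  imports "HOL-Analysis.Analysis"
begin

definition equiv_on :: "(real \<Rightarrow> real) \<Rightarrow> (real \<Rightarrow> real) \<Rightarrow> real set \<Rightarrow> bool" where
  "equiv_on f g A \<longleftrightarrow> (\<exists>C\<ge>1. \<forall>t\<in>A. g t / C \<le> f t \<and> f t \<le> C * g t)"

definition slowly_varying :: "(real \<Rightarrow> real) \<Rightarrow> bool" where
  "slowly_varying b \<longleftrightarrow>
     b \<in> borel_measurable (restrict_space lborel {0<..}) \<and>
     (\<forall>t>0. b t > 0) \<and>
     (\<forall>\<epsilon>>0. \<exists>bp bm. mono_on {0<..} bp \<and> antimono_on {0<..} bm \<and>
         equiv_on (\<lambda>t. t powr \<epsilon> * b t) bp {0<..} \<and>
         equiv_on (\<lambda>t. t powr (-\<epsilon>) * b t) bm {0<..})"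

end

theory Submission
  imports Defs
begin
lemma meas_aux:
  fixes b1 b2 b :: "real \<Rightarrow> real"
  assumes m1: "b1 \<in> borel_measurable (restrict_space lborel {0<..})"
    and m2: "b2 \<in> borel_measurable (restrict_space lborel {0<..})"
    and b_def: "\<And>t. b t = (if t < 1 then b2 (1 / t - 1) else if t = 1 then 1 else b1 (t - 1))"
  shows "b \<in> borel_measurable (restrict_space lborel {0<..})"
proof -
  have s: "{0<..} \<inter> space lborel \<in> sets (lborel::real measure)" by simp
  define B1 where "B1 = (\<lambda>x::real. indicator {0<..} x *\<^sub>R b1 x)"
  define B2 where "B2 = (\<lambda>x::real. indicator {0<..} x *\<^sub>R b2 x)"
  have "B1 \<in> borel_measurable lborel" using m1 unfolding B1_def borel_measurable_restrict_space_iff[OF s] .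
  then have [measurable]: "B1 \<in> borel_measurable borel" by simp
  have "B2 \<in> borel_measurable lborel" using m2 unfolding B2_def borel_measurable_restrict_space_iff[OF s] .
  then have [measurable]: "B2 \<in> borel_measurable borel" by simp
  have eq: "(\<lambda>x. indicator {0<..} x *\<^sub>R b x) = (\<lambda>x. indicator {0<..} x *\<^sub>R
     (if x < 1 then B2 (1 / x - 1) else if x = 1 then 1 else B1 (x - 1)))"
  proof
    fix x :: real
    show "indicator {0<..} x *\<^sub>R b x = indicator {0<..} x *\<^sub>R
     (if x < 1 then B2 (1 / x - 1) else if x = 1 then 1 else B1 (x - 1))"
      by (cases "x > 0") (auto simp: b_def B1_def B2_def indicator_def field_simps)
  qed
  have "(\<lambda>x. indicator {0<..} x *\<^sub>R
     (if x < 1 then B2 (1 / x - 1) else if x = 1 then 1 else B1 (x - 1))) \<in> borel_measurable borel"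
    by measurable
  then have "(\<lambda>x. indicator {0<..} x *\<^sub>R b x) \<in> borel_measurable lborel" unfolding eq by simp
  then show ?thesis unfolding borel_measurable_restrict_space_iff[OF s] .
qed

definition Rg :: "(real \<Rightarrow> real) \<Rightarrow> real \<Rightarrow> real \<Rightarrow> bool" where
  "Rg f e K \<longleftrightarrow> (\<forall>s>0. \<forall>t>0. f s \<le> K * (max (s/t) (t/s)) powr e * f t)"

lemma sv_pair:
  assumes sv: "slowly_varying f" and e: "e > 0"
  obtains K where "K \<ge> 1" "\<And>u t. 0 < u \<Longrightarrow> u \<le> t \<Longrightarrow> f t \<le> K * (t/u) powr e * f u \<and> f u \<le> K * (t/u) powr e * f t"
proof -
  obtain bp bm where mp: "mono_on {0<..} bp" and am: "antimono_on {0<..} bm"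
    and ep: "equiv_on (\<lambda>t. t powr e * f t) bp {0<..}"
    and em: "equiv_on (\<lambda>t. t powr (-e) * f t) bm {0<..}"
    using sv e unfolding slowly_varying_def by blast
  obtain C1 where C1: "C1 \<ge> 1" "\<And>t. t > 0 \<Longrightarrow> bp t / C1 \<le> t powr e * f t \<and> t powr e * f t \<le> C1 * bp t"
    using ep unfolding equiv_on_def by auto
  obtain C2 where C2: "C2 \<ge> 1" "\<And>t. t > 0 \<Longrightarrow> bm t / C2 \<le> t powr (-e) * f t \<and> t powr (-e) * f t \<le> C2 * bm t"
    using em unfolding equiv_on_def by auto
  have fpos: "\<And>t. t > 0 \<Longrightarrow> f t > 0" using sv unfolding slowly_varying_def by blast
  define K where "K = (C1 * C2)^2"
  have CC: "1 \<le> C1 * C2" using mult_mono[of 1 C1 1 C2] C1(1) C2(1) by simp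
  have K1: "K \<ge> 1" using CC unfolding K_def by (simp add: one_le_power)
  have KC1: "C1 * C1 \<le> K" unfolding K_def power2_eq_square
    using C1 C2 by (smt (verit, ccfv_threshold) mult.commute mult.left_commute mult_le_cancel_left1 mult_nonneg_nonneg)
  have KC2: "C2 * C2 \<le> K" unfolding K_def power2_eq_square
    using C1 C2 by (smt (verit, ccfv_threshold) mult.commute mult.left_commute mult_le_cancel_left1 mult_nonneg_nonneg)
  have main: "f t \<le> K * (t/u) powr e * f u \<and> f u \<le> K * (t/u) powr e * f t" if u: "0 < u" "u \<le> t" for u t
  proof
    have t: "t > 0" using u by simp
    have pu: "u powr e > 0" "t powr e > 0" using u t by auto
    have q: "(t/u) powr e = t powr e / u powr e" using u t by (simp add: powr_divide)
    have bpm: "bp u \<le> bp t" by (rule mono_onD[OF mp]) (use u t in auto)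
    have "(\<lambda>x y. y \<le> x) (bm u) (bm t)" by (rule monotone_onD[OF am]) (use u t in auto)
    then have bmm: "bm t \<le> bm u" by simp
    have a1: "u powr e * f u \<le> C1 * bp u" using C1(2)[OF u(1)] by simp
    have a2: "bp t \<le> C1 * (t powr e * f t)" using C1(2)[OF t] C1(1) by (simp add: field_simps)
    have "C1 * bp u \<le> C1 * bp t" using bpm C1(1) by simp
    also have "C1 * bp t \<le> C1 * (C1 * (t powr e * f t))" using a2 C1(1) by simp
    finally have "u powr e * f u \<le> C1 * C1 * (t powr e * f t)" using a1 by simp
    also have "\<dots> \<le> K * (t powr e * f t)"
    proof (rule mult_right_mono[OF KC1])
      show "0 \<le> t powr e * f t" using fpos[OF t] by simp
    qed
    finally have "u powr e * f u \<le> K * (t powr e * f t)" .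
    then have "f u \<le> K * (t powr e * f t) / u powr e" using pu by (simp add: field_simps)
    then show "f u \<le> K * (t/u) powr e * f t" using q by (simp add: field_simps)
    have b1: "t powr (-e) * f t \<le> C2 * bm t" using C2(2)[OF t] by simp
    have b2: "bm u \<le> C2 * (u powr (-e) * f u)" using C2(2)[OF u(1)] C2(1) by (simp add: field_simps)
    have "C2 * bm t \<le> C2 * bm u" using bmm C2(1) by simp
    also have "C2 * bm u \<le> C2 * (C2 * (u powr (-e) * f u))" using b2 C2(1) by simp
    finally have "t powr (-e) * f t \<le> C2 * C2 * (u powr (-e) * f u)" using b1 by simp
    also have "\<dots> \<le> K * (u powr (-e) * f u)"
    proof (rule mult_right_mono[OF KC2])
      show "0 \<le> u powr (-e) * f u" using fpos[OF u(1)] by simp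
    qed
    finally have "t powr (-e) * f t \<le> K * (u powr (-e) * f u)" .
    then have "f t / t powr e \<le> K * (f u / u powr e)" using pu by (simp add: powr_minus field_simps)
    then have "f t \<le> K * (f u / u powr e) * t powr e" using pu by (simp add: field_simps)
    then show "f t \<le> K * (t/u) powr e * f u" using q by (simp add: field_simps)
  qed
  show ?thesis using that K1 main by blast
qed


lemma max_div: fixes s t :: real assumes "0 < s" "s \<le> t" shows "max (s/t) (t/s) = t/s"
proof -
  have "s/t \<le> 1" using assms by simp
  moreover have "1 \<le> t/s" using assms by simp
  ultimately show ?thesis by simp
qed

lemma max_div': fixes s t :: real assumes "0 < s" "s \<le> t" shows "max (t/s) (s/t) = t/s"
  using max_div[OF assms] by (simp add: max.commute)

lemma sv_Rg:
  assumes sv: "slowly_varying f" and e: "e > 0"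
  shows "\<exists>K. Rg f e K"
proof -
  obtain K where K: "K \<ge> 1" "\<And>u t. 0 < u \<Longrightarrow> u \<le> t \<Longrightarrow> f t \<le> K * (t/u) powr e * f u \<and> f u \<le> K * (t/u) powr e * f t"
    using sv_pair[OF sv e] by blast
  have "Rg f e K" unfolding Rg_def
  proof (intro allI impI)
    fix s t :: real assume s: "s > 0" and t: "t > 0"
    show "f s \<le> K * max (s / t) (t / s) powr e * f t"
    proof (cases "s \<le> t")
      case True
      then have "max (s/t) (t/s) = t/s" using s t max_div by auto
      then show ?thesis using K(2)[OF s True] by simp
    next
      case False
      then have "max (s/t) (t/s) = s/t" using t max_div'[of t s] by auto
      then show ?thesis using K(2)[OF t] False by simp
    qed
  qed
  then show ?thesis by blast
qed

lemma Rg_K1: assumes "Rg f e K" "f 1 > 0" shows "K \<ge> 1"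
proof -
  have "f 1 \<le> K * f 1" using assms(1) unfolding Rg_def by (metis max.idem mult.right_neutral powr_one_eq_one div_self one_neq_zero zero_less_one)
  then show ?thesis using assms(2) by simp
qed

lemma Rg_sv:
  assumes m: "f \<in> borel_measurable (restrict_space lborel {0<..})"
    and pos: "\<And>t. t > 0 \<Longrightarrow> f t > 0"
    and R: "\<And>e. e > 0 \<Longrightarrow> \<exists>K. Rg f e K"
  shows "slowly_varying f"
  unfolding slowly_varying_def
proof (intro conjI allI impI m pos)
  fix e :: real assume e: "e > 0"
  obtain K where K: "Rg f e K" using R[OF e] by blast
  have K1: "K \<ge> 1" using Rg_K1[OF K pos] by simp
  have up: "u powr e * f u \<le> K * (t powr e * f t)" if u: "0 < u" "u \<le> t" for u t
  proof -
    have t: "t > 0" using u by simp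
    have mx: "max (u/t) (t/u) = t/u" using u t max_div by auto
    have "f u \<le> K * (t/u) powr e * f t" using K u t mx unfolding Rg_def by metis
    then have "u powr e * f u \<le> u powr e * (K * (t/u) powr e * f t)" by (simp add: mult_left_mono)
    also have "\<dots> = K * (t powr e * f t)" using u t by (simp add: powr_divide field_simps)
    finally show ?thesis .
  qed
  have dn: "u powr (-e) * f u \<le> K * (t powr (-e) * f t)" if u: "0 < t" "t \<le> u" for u t
  proof -
    have t: "u > 0" using u by simp
    have mx: "max (u/t) (t/u) = u/t" using u t max_div' by auto
    have "f u \<le> K * (u/t) powr e * f t" using K u t mx unfolding Rg_def by metis
    then have "u powr (-e) * f u \<le> u powr (-e) * (K * (u/t) powr e * f t)" by (simp add: mult_left_mono)
    also have "\<dots> = K * (t powr (-e) * f t)" using u t by (simp add: powr_divide powr_minus field_simps)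
    finally show ?thesis .
  qed
  define bp where "bp t = Sup ((\<lambda>u. u powr e * f u) ` {0<..t})" for t
  define bm where "bm t = Sup ((\<lambda>u. u powr (-e) * f u) ` {t..})" for t
  have bddp: "bdd_above ((\<lambda>u. u powr e * f u) ` {0<..t})" for t
    using up by (intro bdd_aboveI2[where M = "K * (t powr e * f t)"]) auto
  have bddm: "t > 0 \<Longrightarrow> bdd_above ((\<lambda>u. u powr (-e) * f u) ` {t..})" for t
    using dn by (intro bdd_aboveI2[where M = "K * (t powr (-e) * f t)"]) auto
  show "\<exists>bp bm. mono_on {0<..} bp \<and> antimono_on {0<..} bm \<and>
         equiv_on (\<lambda>t. t powr e * f t) bp {0<..} \<and>
         equiv_on (\<lambda>t. t powr (-e) * f t) bm {0<..}"
  proof (intro exI conjI)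
    show "mono_on {0<..} bp"
    proof (rule mono_onI)
      fix r s :: real assume "r \<in> {0<..}" "s \<in> {0<..}" "r \<le> s"
      then show "bp r \<le> bp s" unfolding bp_def
        by (intro cSUP_subset_mono bddp) auto
    qed
    show "antimono_on {0<..} bm"
    proof (rule monotone_onI)
      fix r s :: real assume "r \<in> {0<..}" "s \<in> {0<..}" "r \<le> s"
      then show "bm s \<le> bm r" unfolding bm_def
        by (intro cSUP_subset_mono bddm) auto
    qed
    show "equiv_on (\<lambda>t. t powr e * f t) bp {0<..}" unfolding equiv_on_def
    proof (intro exI[of _ K] conjI K1 ballI)
      fix t :: real assume t: "t \<in> {0<..}"
      have lo: "t powr e * f t \<le> bp t" unfolding bp_def
        by (rule cSUP_upper[OF _ bddp]) (use t in auto)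
      have hi: "bp t \<le> K * (t powr e * f t)" unfolding bp_def
        by (rule cSUP_least) (use t up in auto)
      have nn: "0 \<le> t powr e * f t" using pos[of t] t by simp
      show "bp t / K \<le> t powr e * f t" using hi K1 by (simp add: field_simps)
      show "t powr e * f t \<le> K * bp t" using lo nn K1
        by (smt (verit) mult_le_cancel_right1 mult.commute)
    qed
    show "equiv_on (\<lambda>t. t powr (-e) * f t) bm {0<..}" unfolding equiv_on_def
    proof (intro exI[of _ K] conjI K1 ballI)
      fix t :: real assume t: "t \<in> {0<..}"
      have lo: "t powr (-e) * f t \<le> bm t" unfolding bm_def
        by (rule cSUP_upper[OF _ bddm]) (use t in auto)
      have hi: "bm t \<le> K * (t powr (-e) * f t)" unfolding bm_def
        by (rule cSUP_least) (use t dn in auto)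
      have nn: "0 \<le> t powr (-e) * f t" using pos[of t] t by simp
      show "bm t / K \<le> t powr (-e) * f t" using hi K1 by (simp add: field_simps)
      show "t powr (-e) * f t \<le> K * bm t" using lo nn K1
        by (smt (verit) mult_le_cancel_right1 mult.commute)
    qed
  qed
qed


lemma Rg_equiv:
  assumes R: "Rg f e K" and K: "K \<ge> 0" and C: "C \<ge> 1"
    and eq: "\<And>t. t > 0 \<Longrightarrow> f t \<le> C * g t \<and> g t \<le> C * f t"
  shows "Rg g e (C * C * K)"
  unfolding Rg_def
proof (intro allI impI)
  fix s t :: real assume s: "s > 0" and t: "t > 0"
  let ?r = "max (s/t) (t/s) powr e"
  have r: "?r \<ge> 0" by simp
  have "g s \<le> C * f s" using eq[OF s] by simp
  also have "\<dots> \<le> C * (K * ?r * f t)"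
    using R[unfolded Rg_def, rule_format, OF s t] C by (intro mult_left_mono) auto
  also have "\<dots> \<le> C * (K * ?r * (C * g t))"
    using eq[OF t] C K r by (simp add: mult_left_mono)
  also have "\<dots> = C * C * K * ?r * g t" by (simp add: ac_simps)
  finally show "g s \<le> C * C * K * ?r * g t" .
qed

lemma Rg_inv:
  assumes R: "Rg f e K"
  shows "Rg (\<lambda>t. f (1/t)) e K"
  unfolding Rg_def
proof (intro allI impI)
  fix s t :: real assume s: "s > 0" and t: "t > 0"
  have ps: "1/s > 0" "1/t > 0" using s t by auto
  have "f (1/s) \<le> K * max ((1/s)/(1/t)) ((1/t)/(1/s)) powr e * f (1/t)"
    using R[unfolded Rg_def, rule_format, OF ps] .
  also have "max ((1/s)/(1/t)) ((1/t)/(1/s)) = max (s/t) (t/s)"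
    using s t by (simp add: max.commute)
  finally show "f (1/s) \<le> K * max (s/t) (t/s) powr e * f (1/t)" .
qed

lemma Rg_glue:
  assumes Rf: "Rg f e K1" and Rh: "Rg h e K2" and K1: "K1 \<ge> 1" and K2: "K2 \<ge> 1"
    and fp: "\<And>t. t > 0 \<Longrightarrow> f t > 0" and hp: "\<And>t. t > 0 \<Longrightarrow> h t > 0"
    and M: "M \<ge> 1" "h 1 \<le> M * f 1" "f 1 \<le> M * h 1"
  shows "Rg (\<lambda>t. if t < 1 then h t else f t) e (K1 * K2 * M)"
  unfolding Rg_def
proof (intro allI impI)
  fix s t :: real assume s: "s > 0" and t: "t > 0"
  let ?r = "max (s/t) (t/s) powr e"
  have r: "?r \<ge> 0" by simp
  have KK: "K1 \<le> K1 * K2 * M" "K2 \<le> K1 * K2 * M"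
  proof -
    have "1 \<le> K2 * M" using K2 M(1) mult_mono[of 1 K2 1 M] by simp
    then show "K1 \<le> K1 * K2 * M" using K1 mult_left_mono[of 1 "K2*M" K1] by (simp add: ac_simps)
    have "1 \<le> K1 * M" using K1 M(1) mult_mono[of 1 K1 1 M] by simp
    then show "K2 \<le> K1 * K2 * M" using K2 mult_left_mono[of 1 "K1*M" K2] by (simp add: ac_simps)
  qed
  show "(if s < 1 then h s else f s) \<le> K1 * K2 * M * ?r * (if t < 1 then h t else f t)"
  proof (cases "s < 1"; cases "t < 1")
    assume "s < 1" "t < 1"
    have "h s \<le> K2 * ?r * h t" using Rh s t unfolding Rg_def by simp
    also have "\<dots> \<le> K1 * K2 * M * ?r * h t"
      using KK r hp[OF t] by (intro mult_right_mono) auto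
    finally show ?thesis using \<open>s < 1\<close> \<open>t < 1\<close> by simp
  next
    assume "\<not> s < 1" "\<not> t < 1"
    have "f s \<le> K1 * ?r * f t" using Rf s t unfolding Rg_def by simp
    also have "\<dots> \<le> K1 * K2 * M * ?r * f t"
      using KK r fp[OF t] by (intro mult_right_mono) auto
    finally show ?thesis using \<open>\<not> s < 1\<close> \<open>\<not> t < 1\<close> by simp
  next
    assume st: "s < 1" "\<not> t < 1"
    let ?P = "(1/s) powr e" let ?Q = "t powr e"
    have m1: "max (s/1) (1/s) = 1/s" using max_div[of s 1] s st by simp
    have m2: "max (1/t) (t/1) = t/1" using max_div[of 1 t] st by simp
    have "h s \<le> K2 * ?P * h 1" using Rh s m1 unfolding Rg_def by (metis zero_less_one)
    also have "\<dots> \<le> K2 * ?P * (M * f 1)" using M K2 by (intro mult_left_mono) auto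
    also have "\<dots> \<le> K2 * ?P * (M * (K1 * ?Q * f t))"
    proof -
      have "f 1 \<le> K1 * ?Q * f t" using Rf t m2 unfolding Rg_def by (metis div_by_1 zero_less_one)
      then show ?thesis using M K2 by (intro mult_left_mono) auto
    qed
    also have "\<dots> = K1 * K2 * M * (?P * ?Q) * f t" by (simp add: ac_simps)
    also have "?P * ?Q = ?r"
    proof -
      have "max (s/t) (t/s) = t/s" using max_div[of s t] s st by simp
      then show ?thesis using s t by (simp add: powr_divide powr_mult[symmetric] field_simps)
    qed
    finally show ?thesis using st by simp
  next
    assume st: "\<not> s < 1" "t < 1"
    let ?P = "s powr e" let ?Q = "(1/t) powr e"
    have m1: "max (s/1) (1/s) = s/1" using max_div'[of 1 s] st by (simp add: max.commute)
    have m2: "max (1/t) (t/1) = 1/t" using max_div'[of t 1] st t by simp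
    have "f s \<le> K1 * ?P * f 1" using Rf s m1 unfolding Rg_def by (metis div_by_1 zero_less_one)
    also have "\<dots> \<le> K1 * ?P * (M * h 1)" using M K1 by (intro mult_left_mono) auto
    also have "\<dots> \<le> K1 * ?P * (M * (K2 * ?Q * h t))"
    proof -
      have "h 1 \<le> K2 * ?Q * h t" using Rh t m2 unfolding Rg_def by (metis zero_less_one)
      then show ?thesis using M K1 by (intro mult_left_mono) auto
    qed
    also have "\<dots> = K1 * K2 * M * (?P * ?Q) * h t" by (simp add: ac_simps)
    also have "?P * ?Q = ?r"
    proof -
      have "max (s/t) (t/s) = s/t" using max_div'[of t s] t st by simp
      then show ?thesis using s t by (simp add: powr_divide powr_mult[symmetric] field_simps)
    qed
    finally show ?thesis using st by simp
  qed
qed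


lemma sv_bounded:
  assumes sv: "slowly_varying f" and L: "L > 0" and lim: "(f \<longlongrightarrow> L) (at_right 0)" and a: "a > 0"
  shows "\<exists>m M. m > 0 \<and> (\<forall>t. 0 < t \<and> t \<le> a \<longrightarrow> m \<le> f t \<and> f t \<le> M)"
proof -
  have fp: "\<And>t. t > 0 \<Longrightarrow> f t > 0" using sv unfolding slowly_varying_def by blast
  obtain K where K: "Rg f 1 K" using sv_Rg[OF sv] by force
  have K1: "K \<ge> 1" using Rg_K1[OF K] fp by simp
  have ev1: "eventually (\<lambda>t. f t > L/2) (at_right 0)" using order_tendstoD(1)[OF lim, of "L/2"] L by simp
  have ev2: "eventually (\<lambda>t. f t < 2*L) (at_right 0)" using order_tendstoD(2)[OF lim, of "2*L"] L by simp
  have "eventually (\<lambda>t. L/2 < f t \<and> f t < 2*L) (at_right (0::real))" using ev1 ev2 eventually_conj by blast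
  then obtain d where d: "d > 0" "\<And>y. y > 0 \<Longrightarrow> y < d \<Longrightarrow> L/2 < f y \<and> f y < 2*L"
    unfolding eventually_at_right_field by auto
  define c where "c = min (d/2) a"
  have c: "c > 0" "c < d" "c \<le> a" using d a unfolding c_def by auto
  have fc: "L/2 < f c" "f c < 2*L" using d(2)[OF c(1) c(2)] by auto
  define m where "m = min (L/2) ((L/2) / (K * (a/c)))"
  define M where "M = max (2*L) (K * (a/c) * (2*L))"
  have m0: "m > 0" unfolding m_def using L K1 a c by auto
  have "\<forall>t. 0 < t \<and> t \<le> a \<longrightarrow> m \<le> f t \<and> f t \<le> M"
  proof (intro allI impI)
    fix t assume t: "0 < t \<and> t \<le> a"
    show "m \<le> f t \<and> f t \<le> M"
    proof (cases "t < d")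
      case True
      then show ?thesis using d(2)[of t] t unfolding m_def M_def by auto
    next
      case False
      then have ct: "c \<le> t" using c by simp
      have mx1: "max (t/c) (c/t) = t/c" using max_div'[OF c(1) ct] .
      have mx2: "max (c/t) (t/c) = t/c" using max_div[OF c(1) ct] .
      have tc: "t/c \<le> a/c" using t c by (simp add: divide_right_mono)
      have tc0: "t/c > 0" using t c by simp
      have "f t \<le> K * (t/c) * f c"
        using K[unfolded Rg_def, rule_format, of t c] t c mx1 tc0 by simp
      also have "\<dots> \<le> K * (a/c) * (2*L)"
        using tc fc K1 tc0 a c(1) by (intro mult_mono) (auto intro: mult_left_mono)
      finally have up: "f t \<le> M" unfolding M_def by simp
      have "f c \<le> K * (t/c) * f t"
        using K[unfolded Rg_def, rule_format, of c t] t c mx2 tc0 by simp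
      also have "\<dots> \<le> K * (a/c) * f t"
        using tc K1 fp[of t] t by (intro mult_right_mono mult_left_mono) auto
      finally have "f c \<le> K * (a/c) * f t" .
      then have "L/2 \<le> K * (a/c) * f t" using fc by linarith
      then have "(L/2) / (K * (a/c)) \<le> f t" using K1 a c by (simp add: field_simps)
      then have "m \<le> f t" unfolding m_def by simp
      then show ?thesis using up by simp
    qed
  qed
  then show ?thesis using m0 by blast
qed

lemma sv_shift:
  assumes sv: "slowly_varying f" and lim: "\<exists>L>0. (f \<longlongrightarrow> L) (at_right 0)"
  shows "\<exists>C\<ge>1. \<forall>x>1. f (x - 1) \<le> C * f x \<and> f x \<le> C * f (x - 1)"
proof -
  have fp: "\<And>t. t > 0 \<Longrightarrow> f t > 0" using sv unfolding slowly_varying_def by blast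
  obtain L where L: "L > 0" "(f \<longlongrightarrow> L) (at_right 0)" using lim by blast
  obtain m M where mM: "m > 0" "\<And>t. 0 < t \<Longrightarrow> t \<le> 2 \<Longrightarrow> m \<le> f t \<and> f t \<le> M"
    using sv_bounded[OF sv L(1) L(2), of 2] by auto
  obtain K where K: "Rg f 1 K" using sv_Rg[OF sv] by force
  have K1: "K \<ge> 1" using Rg_K1[OF K] fp by simp
  define C where "C = max 1 (max (2*K) (M/m))"
  have "\<forall>x>1. f (x - 1) \<le> C * f x \<and> f x \<le> C * f (x - 1)"
  proof (intro allI impI)
    fix x :: real assume x: "x > 1"
    show "f (x - 1) \<le> C * f x \<and> f x \<le> C * f (x - 1)"
    proof (cases "x < 2")
      case True
      have b1: "m \<le> f x" "f x \<le> M" using mM(2)[of x] x True by auto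
      have b2: "m \<le> f (x-1)" "f (x-1) \<le> M" using mM(2)[of "x-1"] x True by auto
      have "M = (M/m) * m" using mM(1) by simp
      have i1: "f (x-1) \<le> (M/m) * f x"
      proof -
        have "f (x-1) \<le> (M/m) * m" using b2 mM(1) by simp
        also have "\<dots> \<le> (M/m) * f x" using b1 b2 mM(1) by (intro mult_left_mono) auto
        finally show ?thesis .
      qed
      have i2: "f x \<le> (M/m) * f (x-1)"
      proof -
        have "f x \<le> (M/m) * m" using b1 mM(1) by simp
        also have "\<dots> \<le> (M/m) * f (x-1)" using b1 b2 mM(1) by (intro mult_left_mono) auto
        finally show ?thesis .
      qed
      have "M/m \<le> C" unfolding C_def by simp
      then show ?thesis using i1 i2 fp[of x] fp[of "x-1"] x
        by (smt (verit) mult_right_mono)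
    next
      case False
      have x0: "x - 1 > 0" using x by simp
      have le: "x - 1 \<le> x" by simp
      have mx1: "max ((x-1)/x) (x/(x-1)) = x/(x-1)" using max_div[OF x0 le] .
      have mx2: "max (x/(x-1)) ((x-1)/x) = x/(x-1)" using max_div'[OF x0 le] .
      have q: "x/(x-1) \<le> 2" using False x by (simp add: field_simps)
      have q0: "x/(x-1) > 0" using x by simp
      have "f (x-1) \<le> K * (x/(x-1)) * f x"
        using K[unfolded Rg_def, rule_format, OF x0, of x] x mx1 q0 by simp
      also have "\<dots> \<le> K * 2 * f x" using q K1 fp[of x] x by (intro mult_right_mono mult_left_mono) auto
      also have "\<dots> \<le> C * f x" unfolding C_def using fp[of x] x by (intro mult_right_mono) auto
      finally have i1: "f (x-1) \<le> C * f x" .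
      have "f x \<le> K * (x/(x-1)) * f (x-1)"
        using K[unfolded Rg_def, rule_format, of x "x-1"] x x0 mx2 q0 by simp
      also have "\<dots> \<le> K * 2 * f (x-1)" using q K1 fp[OF x0] by (intro mult_right_mono mult_left_mono) auto
      also have "\<dots> \<le> C * f (x-1)" unfolding C_def using fp[OF x0] by (intro mult_right_mono) auto
      finally show ?thesis using i1 by simp
    qed
  qed
  moreover have "C \<ge> 1" unfolding C_def by simp
  ultimately show ?thesis by blast
qed


lemma scale_le: fixes x y C D :: real assumes "x \<le> C * y" "C \<le> D" "y > 0" shows "x \<le> D * y"
  using assms by (smt (verit) mult_right_mono)

theorem lemma3p6:
  fixes b1 b2 b :: "real \<Rightarrow> real"
  assumes sv1: "slowly_varying b1" and sv2: "slowly_varying b2"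
    and lim1: "\<exists>L>0. (b1 \<longlongrightarrow> L) (at_right 0)"
    and lim2: "\<exists>L>0. (b2 \<longlongrightarrow> L) (at_right 0)"
    and b_def: "\<And>t. b t = (if t < 1 then b2 (1 / t - 1) else if t = 1 then 1 else b1 (t - 1))"
  shows "slowly_varying b \<and> equiv_on b (\<lambda>t. b2 (1 / t)) {0<..<1} \<and> equiv_on b b1 {1<..}"
proof -
  have fp1: "\<And>t. t > 0 \<Longrightarrow> b1 t > 0" using sv1 unfolding slowly_varying_def by blast
  have fp2: "\<And>t. t > 0 \<Longrightarrow> b2 t > 0" using sv2 unfolding slowly_varying_def by blast
  have m1: "b1 \<in> borel_measurable (restrict_space lborel {0<..})" using sv1 unfolding slowly_varying_def by blast
  have m2: "b2 \<in> borel_measurable (restrict_space lborel {0<..})" using sv2 unfolding slowly_varying_def by blast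
  obtain C1 where C1: "C1 \<ge> 1" "\<And>x. x > 1 \<Longrightarrow> b1 (x - 1) \<le> C1 * b1 x \<and> b1 x \<le> C1 * b1 (x - 1)"
    using sv_shift[OF sv1 lim1] by blast
  obtain C2 where C2: "C2 \<ge> 1" "\<And>x. x > 1 \<Longrightarrow> b2 (x - 1) \<le> C2 * b2 x \<and> b2 x \<le> C2 * b2 (x - 1)"
    using sv_shift[OF sv2 lim2] by blast
  have E1: "equiv_on b b1 {1<..}" unfolding equiv_on_def
  proof (intro exI[of _ C1] conjI C1(1) ballI)
    fix t :: real assume t: "t \<in> {1<..}"
    then have bt: "b t = b1 (t - 1)" using b_def by simp
    show "b1 t / C1 \<le> b t" using C1 t bt by (simp add: field_simps)
    show "b t \<le> C1 * b1 t" using C1 t bt by simp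
  qed
  have E2: "equiv_on b (\<lambda>t. b2 (1 / t)) {0<..<1}" unfolding equiv_on_def
  proof (intro exI[of _ C2] conjI C2(1) ballI)
    fix t :: real assume t: "t \<in> {0<..<1}"
    then have bt: "b t = b2 (1/t - 1)" using b_def by simp
    have x: "1/t > 1" using t by simp
    show "b2 (1/t) / C2 \<le> b t" using C2(2)[OF x] C2(1) bt by (simp add: field_simps)
    show "b t \<le> C2 * b2 (1/t)" using C2(2)[OF x] bt by simp
  qed
  have bpos: "\<And>t. t > 0 \<Longrightarrow> b t > 0"
  proof -
    fix t :: real assume t: "t > 0"
    show "b t > 0"
    proof (cases "t < 1")
      case True
      then have "1/t - 1 > 0" using t by simp
      then show ?thesis using True fp2 b_def by simp
    next
      case False
      then show ?thesis using fp1 b_def by simp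
    qed
  qed
  have SV: "slowly_varying b"
  proof (rule Rg_sv[OF meas_aux[OF m1 m2 b_def] bpos])
    fix e :: real assume e: "e > 0"
    obtain K1 where K1: "Rg b1 e K1" using sv_Rg[OF sv1 e] by blast
    obtain K2 where K2': "Rg b2 e K2" using sv_Rg[OF sv2 e] by blast
    have K2: "Rg (\<lambda>t. b2 (1/t)) e K2" using Rg_inv[OF K2'] .
    have K11: "K1 \<ge> 1" using Rg_K1[OF K1] fp1 by simp
    have K21: "K2 \<ge> 1" using Rg_K1[OF K2'] fp2 by simp
    define M where "M = max 1 (max (b2 1 / b1 1) (b1 1 / b2 1))"
    have p1: "b1 1 > 0" "b2 1 > 0" using fp1 fp2 by auto
    have M1: "M \<ge> 1" unfolding M_def by simp
    have M2: "b2 1 \<le> M * b1 1"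
    proof -
      have "b2 1 = (b2 1 / b1 1) * b1 1" using p1 by simp
      also have "\<dots> \<le> M * b1 1" unfolding M_def using p1 by (intro mult_right_mono) auto
      finally show ?thesis .
    qed
    have M3: "b1 1 \<le> M * b2 1"
    proof -
      have "b1 1 = (b1 1 / b2 1) * b2 1" using p1 by simp
      also have "\<dots> \<le> M * b2 1" unfolding M_def using p1 by (intro mult_right_mono) auto
      finally show ?thesis .
    qed
    have G: "Rg (\<lambda>t. if t < 1 then b2 (1/t) else b1 t) e (K1 * K2 * M)"
      using Rg_glue[OF K1 K2 K11 K21 fp1 _ M1] M2 M3 fp2 by simp
    define C where "C = max (max C1 C2) (max (b1 1) (1 / b1 1))"
    have CC: "C1 \<le> C" "C2 \<le> C" "b1 1 \<le> C" "1 / b1 1 \<le> C" "C \<ge> 1" unfolding C_def using C1(1) by auto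
    have eq: "(if t < 1 then b2 (1/t) else b1 t) \<le> C * b t \<and> b t \<le> C * (if t < 1 then b2 (1/t) else b1 t)"
      if t: "t > 0" for t
    proof (cases "t < 1")
      case True
      have x: "1/t > 1" using t True by simp
      have bt: "b t = b2 (1/t - 1)" using True b_def by simp
      have y0: "1/t - 1 > 0" using x by simp
      show ?thesis using C2(2)[OF x] True bt scale_le[OF _ CC(2) fp2[OF y0]] scale_le[OF _ CC(2) fp2] t by auto
    next
      case False
      show ?thesis
      proof (cases "t = 1")
        case True
        have bt: "b t = 1" using True b_def by simp
        have "1 = (1 / b1 1) * b1 1" using p1 by simp
        also have "\<dots> \<le> C * b1 1" using CC p1 by (intro mult_right_mono) auto
        finally have "1 \<le> C * b1 1" .
        then show ?thesis using True bt CC by simp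
      next
        case F2: False
        then have x: "t > 1" using False by simp
        have bt: "b t = b1 (t - 1)" using x b_def by simp
        have y0: "t - 1 > 0" using x by simp
        show ?thesis using C1(2)[OF x] x bt scale_le[OF _ CC(1) fp1[OF y0]] scale_le[OF _ CC(1) fp1] t by auto
      qed
    qed
    have "Rg b e (C * C * (K1 * K2 * M))"
      by (rule Rg_equiv[OF G _ CC(5) eq]) (use K11 K21 M1 in auto)
    then show "\<exists>K. Rg b e K" by blast
  qed
  show ?thesis using SV E1 E2 by blast
qed

end
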